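(* Let $\alpha,q\in(-1,1)$, $x\in H$ and $n\ge1$. Then on $H^{\otimes n}$, $$b_{\alpha,q}(x)=r(x)\,R^{(n)}_{\alpha,q},$$ where $R^{(n)}_{\alpha,q}=1+\sum_{k=1}^{n-1}q^{k}\pi_{n-1}\cdots\pi_{n-k}+\alpha q^{n-1}\pi_{n-1}\pi_{n-2}\cdots\pi_1\pi_0\big(1+\sum_{k=1}^{n-1}q^{k}\pi_1\cdots\pi_k\big)$.
   Context: Let $H_\mathbb{R}$ be a real separable Hilbert space and $H$ its complexification, with inner product $\langle\cdot,\cdot\rangle$ linear in the second and antilinear in the first argument. Fix a self-adjoint involution $x\mapsto\bar x$ on $H$ (linear, $\bar{\bar x}=x$, $\langle\bar x,y\rangle=\langle x,\bar y\rangle$). Let $\Sigma(n)$ be the group of bijections $\sigma$ of $\{\pm1,\dots,\pm n\}$ with $\sigma(-k)=-\sigma(k)$, generated by $\pi_0=(1,-1)$ and $\pi_i=(i,i+1)$, $1\le i\le n-1$; for $\sigma$ written as a reduced (minimal length) word, $l_1(\sigma)$ is the number of occurrences of $\pi_0$ and $l_2(\sigma)$ the number of occurrences of $\pi_i$, $i\ge1$. $\Sigma(n)$ acts on $H^{\otimes n}$ by $\pi_i$ swapping the $i$-th and $(i+1)$-th tensor factors and $\pi_0(x_1\otimes\cdots\otimes x_n)=\overline{x_1}\otimes x_2\otimes\cdots\otimes x_n$. Set $P^{(n)}_{\alpha,q}=\sum_{\sigma\in\Sigma(n)}\alpha^{l_1(\sigma)}q^{l_2(\sigma)}\sigma$ ($n\ge1$,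 convention $0^0=1$), $P^{(0)}_{\alpha,q}=\mathrm{id}$. Let $\mathcal F=\bigoplus_{n\ge0}H^{\otimes n}$ be the algebraic full Fock space (finite sums, no completion), $H^{\otimes0}=\mathbb{C}\Omega$, with $\langle x_1\otimes\cdots\otimes x_m,y_1\otimes\cdots\otimes y_n\rangle_{0,0}=\delta_{m,n}\prod_i\langle x_i,y_i\rangle$, and $\langle f,g\rangle_{\alpha,q}=\langle f,P_{\alpha,q}g\rangle_{0,0}$ where $P_{\alpha,q}=\bigoplus_n P^{(n)}_{\alpha,q}$; for $\alpha,q\in(-1,1)$ this is an inner product. The right creation operator is $r^*(x)(x_1\otimes\cdots\otimes x_n)=x_1\otimes\cdots\otimes x_n\otimes x$, $r^*(x)\Omega=x$, and the free right annihilation operator is $r(x)(x_1\otimes\cdots\otimes x_n)=\langle x,x_n\rangle x_1\otimes\cdots\otimes x_{n-1}$ ($n\ge2$), $r(x)x_1=\langle x,x_1\rangle\Omega$, $r(x)\Omega=0$. The $(\alpha,q)$-creation operator is $b^*_{\alpha,q}(x):=r^*(x)$ and the $(\alpha,q)$-annihilation operator $b_{\alpha,q}(x)$ is its adjoint with respect to $\langle\cdot,\cdot\rangle_{\alpha,q}$. *)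

theory Defs
  imports "HOL-Analysis.Analysis"
begin

text \<open>An element (u,v) of 'r \<times> 'r stands for u + i v. Addition is componentwise.\<close>

definition cscale :: "complex \<Rightarrow> ('r::real_vector \<times> 'r) \<Rightarrow> 'r \<times> 'r" where
  "cscale z h = (Re z *\<^sub>R fst h - Im z *\<^sub>R snd h, Re z *\<^sub>R snd h + Im z *\<^sub>R fst h)"

text \<open>Inner product on H, antilinear in the first and linear in the second argument.\<close>
definition hip :: "('r::real_inner \<times> 'r) \<Rightarrow> ('r \<times> 'r) \<Rightarrow> complex" where
  "hip h k = Complex (fst h \<bullet> fst k + snd h \<bullet> snd k) (fst h \<bullet> snd k - snd h \<bullet> fst k)"

definition sset :: "nat \<Rightarrow> int set" where
  "sset n = {k. 1 \<le> \<bar>k\<bar> \<and> \<bar>k\<bar> \<le> int n}"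

definition signed_perms :: "nat \<Rightarrow> (int \<Rightarrow> int) set" where
  "signed_perms n = {\<sigma>. bij_betw \<sigma> (sset n) (sset n) \<and> (\<forall>k\<in>sset n. \<sigma> (-k) = - \<sigma> k)
                          \<and> (\<forall>k. k \<notin> sset n \<longrightarrow> \<sigma> k = k)}"

text \<open>Generators: 0 stands for \<pi>_0 = (1,-1), i \<ge> 1 for \<pi>_i = (i,i+1) (together with (-i,-(i+1))).\<close>
definition gen :: "nat \<Rightarrow> int \<Rightarrow> int" where
  "gen i = (if i = 0 then Fun.swap 1 (-1) id
            else Fun.swap (int i) (int i + 1) id \<circ> Fun.swap (- int i) (- int i - 1) id)"

text \<open>A word [a1,...,ak] denotes the product \<pi>_a1 \<pi>_a2 ... \<pi>_ak.\<close>
definition word_eval :: "nat list \<Rightarrow> int \<Rightarrow> int" where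
  "word_eval w = foldr (\<lambda>i f. gen i \<circ> f) w id"

definition reduced_word :: "nat \<Rightarrow> nat list \<Rightarrow> (int \<Rightarrow> int) \<Rightarrow> bool" where
  "reduced_word n w \<sigma> \<longleftrightarrow> set w \<subseteq> {0..<n} \<and> word_eval w = \<sigma> \<and>
     (\<forall>w'. set w' \<subseteq> {0..<n} \<and> word_eval w' = \<sigma> \<longrightarrow> length w \<le> length w')"

definition rword :: "nat \<Rightarrow> (int \<Rightarrow> int) \<Rightarrow> nat list" where
  "rword n \<sigma> = (SOME w. reduced_word n w \<sigma>)"

definition l1 :: "nat \<Rightarrow> (int \<Rightarrow> int) \<Rightarrow> nat" where
  "l1 n \<sigma> = count_list (rword n \<sigma>) 0"

definition l2 :: "nat \<Rightarrow> (int \<Rightarrow> int) \<Rightarrow> nat" where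
  "l2 n \<sigma> = length (filter (\<lambda>i. i \<noteq> 0) (rword n \<sigma>))"

section \<open>Action on elementary tensors (represented as lists x1 \<otimes> ... \<otimes> xn)\<close>

definition act_gen :: "('h \<Rightarrow> 'h) \<Rightarrow> nat \<Rightarrow> 'h list \<Rightarrow> 'h list" where
  "act_gen bar i xs = (if i = 0 then (case xs of [] \<Rightarrow> [] | y # ys \<Rightarrow> bar y # ys)
                       else xs[i - 1 := xs ! i, i := xs ! (i - 1)])"

definition act_word :: "('h \<Rightarrow> 'h) \<Rightarrow> nat list \<Rightarrow> 'h list \<Rightarrow> 'h list" where
  "act_word bar w xs = foldr (act_gen bar) w xs"

definition sigma_act :: "('h \<Rightarrow> 'h) \<Rightarrow> nat \<Rightarrow> (int \<Rightarrow> int) \<Rightarrow> 'h list \<Rightarrow> 'h list" where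
  "sigma_act bar n \<sigma> xs = act_word bar (rword n \<sigma>) xs"

section \<open>Algebraic full Fock space: finite formal linear combinations of elementary tensors\<close>

type_synonym 'h fock = "(complex \<times> 'h list) list"

definition ip0 :: "('h \<Rightarrow> 'h \<Rightarrow> complex) \<Rightarrow> 'h list \<Rightarrow> 'h list \<Rightarrow> complex" where
  "ip0 ip xs ys = (if length xs = length ys then (\<Prod>i<length xs. ip (xs ! i) (ys ! i)) else 0)"

text \<open>< xs, P_{\<alpha>,q} ys >_{0,0} on elementary tensors.\<close>
definition ipaq :: "('h \<Rightarrow> 'h \<Rightarrow> complex) \<Rightarrow> ('h \<Rightarrow> 'h) \<Rightarrow> real \<Rightarrow> real \<Rightarrow> 'h list \<Rightarrow> 'h list \<Rightarrow> complex" where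
  "ipaq ip bar \<alpha> q xs ys =
     (\<Sum>\<sigma>\<in>signed_perms (length ys).
        complex_of_real \<alpha> ^ l1 (length ys) \<sigma> * complex_of_real q ^ l2 (length ys) \<sigma>
        * ip0 ip xs (sigma_act bar (length ys) \<sigma> ys))"

definition fip :: "('h list \<Rightarrow> 'h list \<Rightarrow> complex) \<Rightarrow> 'h fock \<Rightarrow> 'h fock \<Rightarrow> complex" where
  "fip E F G = (\<Sum>(c, xs)\<leftarrow>F. \<Sum>(d, ys)\<leftarrow>G. cnj c * d * E xs ys)"

definition fop :: "('h list \<Rightarrow> 'h fock) \<Rightarrow> 'h fock \<Rightarrow> 'h fock" where
  "fop T F = concat (map (\<lambda>(c, xs). map (\<lambda>(d, ys). (c * d, ys)) (T xs)) F)"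

definition rann :: "('h \<Rightarrow> 'h \<Rightarrow> complex) \<Rightarrow> 'h \<Rightarrow> 'h list \<Rightarrow> 'h fock" where
  "rann ip x xs = (if xs = [] then [] else [(ip x (last xs), butlast xs)])"

text \<open>Right creation operator r*(x) = b*_{\<alpha>,q}(x).\<close>
definition rcre :: "'h \<Rightarrow> 'h list \<Rightarrow> 'h fock" where
  "rcre x xs = [(1, xs @ [x])]"

definition Rop :: "('h \<Rightarrow> 'h) \<Rightarrow> real \<Rightarrow> real \<Rightarrow> nat \<Rightarrow> 'h list \<Rightarrow> 'h fock" where
  "Rop bar \<alpha> q n xs =
     [(1, xs)]
     @ map (\<lambda>k. (complex_of_real q ^ k, act_word bar (rev [n - k..<n]) xs)) [1..<n]
     @ [(complex_of_real \<alpha> * complex_of_real q ^ (n - 1), act_word bar (rev [0..<n]) xs)]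
     @ map (\<lambda>k. (complex_of_real \<alpha> * complex_of_real q ^ (n - 1) * complex_of_real q ^ k,
                  act_word bar (rev [0..<n] @ [1..<k + 1]) xs)) [1..<n]"

end

theory Submission
  imports Defs
begin

lemma gen_simp: "gen i k = (if i = 0 then (if k = 1 then -1 else if k = -1 then 1 else k)
   else (if k = int i then int i + 1 else if k = int i + 1 then int i
         else if k = - int i then - int i - 1 else if k = - int i - 1 then - int i else k))"
  unfolding gen_def by (auto simp: transpose_def)

lemma gen_odd: "gen i (-k) = - gen i k"
  by (simp add: gen_simp)

lemma gen_gen: "gen i (gen i k) = k"
  by (simp add: gen_simp)

lemma word_eval_Nil[simp]: "word_eval [] = id"
  by (simp add: word_eval_def)
lemma word_eval_Cons[simp]: "word_eval (a # w) = gen a \<circ> word_eval w"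
  by (simp add: word_eval_def)
lemma word_eval_append: "word_eval (v @ w) = word_eval v \<circ> word_eval w"
  by (induction v) auto

lemma word_eval_odd: "word_eval w (-k) = - word_eval w k"
  by (induction w arbitrary: k) (auto simp: gen_odd)

lemma word_eval_rev: "word_eval (rev w) (word_eval w k) = k"
  by (induction w arbitrary: k) (auto simp: word_eval_append gen_gen)

lemma word_eval_rev2: "word_eval w (word_eval (rev w) k) = k"
  using word_eval_rev[of "rev w"] by simp

lemma sset_iff: "k \<in> sset n \<longleftrightarrow> 1 \<le> \<bar>k\<bar> \<and> \<bar>k\<bar> \<le> int n"
  by (simp add: sset_def)

lemma gen_sset: "i < n \<Longrightarrow> k \<in> sset n \<Longrightarrow> gen i k \<in> sset n"
  by (auto simp: sset_iff gen_simp)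

lemma gen_out: "i < n \<Longrightarrow> k \<notin> sset n \<Longrightarrow> gen i k = k"
  by (auto simp: sset_iff gen_simp)

lemma gen_perm: "i < n \<Longrightarrow> gen i \<in> signed_perms n"
  unfolding signed_perms_def
  apply (intro CollectI conjI ballI allI impI)
    apply (rule bij_betw_byWitness[where f'="gen i"])
       apply (auto simp: gen_gen gen_sset gen_odd gen_out)
  done

lemma id_perm: "id \<in> signed_perms n"
  by (simp add: signed_perms_def)

lemma perm_sset: "\<sigma> \<in> signed_perms n \<Longrightarrow> k \<in> sset n \<Longrightarrow> \<sigma> k \<in> sset n"
  unfolding signed_perms_def bij_betw_def by auto

lemma perm_out: "\<sigma> \<in> signed_perms n \<Longrightarrow> k \<notin> sset n \<Longrightarrow> \<sigma> k = k"
  unfolding signed_perms_def by auto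

lemma perm_odd: "\<sigma> \<in> signed_perms n \<Longrightarrow> \<sigma> (-k) = - \<sigma> k"
proof -
  assume s: "\<sigma> \<in> signed_perms n"
  show ?thesis
  proof (cases "k \<in> sset n")
    case True then show ?thesis using s unfolding signed_perms_def by auto
  next
    case False
    then have "-k \<notin> sset n" by (auto simp: sset_iff)
    then show ?thesis using False perm_out[OF s] by simp
  qed
qed

lemma perm_inj: "\<sigma> \<in> signed_perms n \<Longrightarrow> inj \<sigma>"
proof (rule injI)
  fix a b assume s: "\<sigma> \<in> signed_perms n" and e: "\<sigma> a = \<sigma> b"
  have io: "inj_on \<sigma> (sset n)" using s unfolding signed_perms_def bij_betw_def by auto
  show "a = b"
  proof (cases "a \<in> sset n"; cases "b \<in> sset n")
    assume "a \<in> sset n" "b \<in> sset n" then show ?thesis using io e by (auto dest: inj_onD)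
  next
    assume "a \<in> sset n" "b \<notin> sset n"
    then show ?thesis using e perm_out[OF s] perm_sset[OF s] by metis
  next
    assume "a \<notin> sset n" "b \<in> sset n"
    then show ?thesis using e perm_out[OF s] perm_sset[OF s] by metis
  next
    assume "a \<notin> sset n" "b \<notin> sset n"
    then show ?thesis using e perm_out[OF s] by metis
  qed
qed

lemma perm_comp: "\<sigma> \<in> signed_perms n \<Longrightarrow> \<tau> \<in> signed_perms n \<Longrightarrow> \<sigma> \<circ> \<tau> \<in> signed_perms n"
  unfolding signed_perms_def
  apply (intro CollectI conjI ballI allI impI)
  using bij_betw_trans apply blast
   apply (metis comp_apply signed_perms_def mem_Collect_eq perm_odd perm_sset)
  apply (simp add: signed_perms_def)
  done

lemma word_perm: "set w \<subseteq> {0..<n} \<Longrightarrow> word_eval w \<in> signed_perms n"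
  by (induction w) (auto intro!: perm_comp gen_perm id_perm)

definition NN :: "nat \<Rightarrow> (int \<Rightarrow> int) \<Rightarrow> nat" where
  "NN n \<sigma> = (\<Sum>j\<in>{1..int n}. if \<sigma> j < 0 then 1 else 0)"
definition phi :: "int \<Rightarrow> int \<Rightarrow> nat" where
  "phi a b = (if b < a then 1 else 0) + (if a + b < 0 then 1 else 0)"
definition Pairs :: "nat \<Rightarrow> (int \<times> int) set" where
  "Pairs n = {(i, j). 1 \<le> i \<and> i < j \<and> j \<le> int n}"
definition MM :: "nat \<Rightarrow> (int \<Rightarrow> int) \<Rightarrow> nat" where
  "MM n \<sigma> = (\<Sum>p\<in>Pairs n. phi (\<sigma> (fst p)) (\<sigma> (snd p)))"

lemma finite_Pairs[simp]: "finite (Pairs n)"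
proof -
  have "Pairs n \<subseteq> {1..int n} \<times> {1..int n}" by (auto simp: Pairs_def)
  then show ?thesis using finite_subset by blast
qed

lemma phi_neg: "phi (-a) b = phi a b"
  by (simp add: phi_def)

lemma NN_g0:
  assumes "n \<ge> 1" "\<And>k. \<sigma> (-k) = - \<sigma> k"
  shows "NN n (\<sigma> \<circ> gen 0) + (if \<sigma> 1 < 0 then 1 else 0) = NN n \<sigma> + (if \<sigma> 1 > 0 then 1 else 0)"
proof -
  have e: "{1..int n} = insert 1 {2..int n}" using assms(1) by auto
  have r: "(\<Sum>j\<in>{2..int n}. if (\<sigma> \<circ> gen 0) j < 0 then 1 else 0) = (\<Sum>j\<in>{2..int n}. if \<sigma> j < 0 then 1 else (0::nat))"
    by (rule sum.cong) (auto simp: gen_simp)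
  have g1: "(\<sigma> \<circ> gen 0) 1 = - \<sigma> 1" using assms(2)[of 1] by (simp add: gen_simp)
  show ?thesis unfolding NN_def e using r g1 by simp
qed

lemma NN_gi:
  assumes "1 \<le> i" "i < n"
  shows "NN n (\<sigma> \<circ> gen i) = NN n \<sigma>"
proof -
  have "bij_betw (gen i) {1..int n} {1..int n}"
    by (rule bij_betw_byWitness[where f'="gen i"]) (use assms in \<open>auto simp: gen_simp\<close>)
  from sum.reindex_bij_betw[OF this, of "\<lambda>j. if \<sigma> j < 0 then 1 else (0::nat)"]
  show ?thesis unfolding NN_def by simp
qed

lemma MM_g0:
  assumes "\<And>k. \<sigma> (-k) = - \<sigma> k"
  shows "MM n (\<sigma> \<circ> gen 0) = MM n \<sigma>"
  unfolding MM_def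
proof (rule sum.cong)
  fix p assume p: "p \<in> Pairs n"
  then obtain a b where pab: "p = (a, b)" "1 \<le> a" "a < b" "b \<le> int n" by (auto simp: Pairs_def)
  have gb: "gen 0 b = b" using pab by (simp add: gen_simp)
  show "phi ((\<sigma> \<circ> gen 0) (fst p)) ((\<sigma> \<circ> gen 0) (snd p)) = phi (\<sigma> (fst p)) (\<sigma> (snd p))"
  proof (cases "a = 1")
    case True
    then show ?thesis using pab gb assms[of 1] by (simp add: gen_simp phi_neg)
  next
    case False
    then show ?thesis using pab gb by (simp add: gen_simp)
  qed
qed simp

lemma MM_gi:
  assumes "1 \<le> i" "i < n"
  shows "MM n (\<sigma> \<circ> gen i) + (if \<sigma> (int i + 1) < \<sigma> (int i) then 1 else 0)
       = MM n \<sigma> + (if \<sigma> (int i) < \<sigma> (int i + 1) then 1 else 0)"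
proof -
  define P' where "P' = Pairs n - {(int i, int i + 1)}"
  have mem: "(int i, int i + 1) \<in> Pairs n" using assms by (auto simp: Pairs_def)
  have PP: "Pairs n = insert (int i, int i + 1) P'" using mem by (auto simp: P'_def)
  have fP: "finite P'" by (simp add: P'_def)
  have nP: "(int i, int i + 1) \<notin> P'" by (simp add: P'_def)
  let ?h = "\<lambda>p. (gen i (fst p), gen i (snd p))"
  have gp: "\<And>k. 1 \<le> k \<Longrightarrow> gen i k = (if k = int i then int i + 1 else if k = int i + 1 then int i else k)"
    using assms by (auto simp: gen_simp)
  have into: "?h p \<in> P'" if "p \<in> P'" for p
  proof -
    obtain a b where ab0: "p = (a, b)" by (cases p)
    have ab: "p = (a, b)" "1 \<le> a" "a < b" "b \<le> int n" "(a, b) \<noteq> (int i, int i + 1)"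
      using that ab0 unfolding P'_def Pairs_def by auto
    show ?thesis unfolding ab(1) using ab(2-5) assms
      by (simp add: gp P'_def Pairs_def) linarith
  qed
  have inv: "?h (?h p) = p" for p by (simp add: gen_gen)
  have bij: "bij_betw ?h P' P'"
    by (rule bij_betw_byWitness[where f'="?h"]) (use into inv in auto)
  have re: "(\<Sum>p\<in>P'. phi ((\<sigma> \<circ> gen i) (fst p)) ((\<sigma> \<circ> gen i) (snd p)))
          = (\<Sum>p\<in>P'. phi (\<sigma> (fst p)) (\<sigma> (snd p)))"
    using sum.reindex_bij_betw[OF bij, of "\<lambda>p. phi (\<sigma> (fst p)) (\<sigma> (snd p))"] by simp
  have g1: "gen i (int i) = int i + 1" "gen i (int i + 1) = int i" using assms by (auto simp: gen_simp)
  show ?thesis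
    unfolding MM_def PP sum.insert[OF fP nP] re
    using g1 by (simp add: phi_def)
qed

lemma word_eval_snoc: "word_eval (w @ [a]) = word_eval w \<circ> gen a"
  by (simp add: word_eval_append)

lemma NN_id: "NN n id = 0"
  by (simp add: NN_def)

lemma MM_id: "MM n id = 0"
  unfolding MM_def by (rule sum.neutral) (auto simp: Pairs_def phi_def)

lemma word_lower:
  "set w \<subseteq> {0..<n} \<Longrightarrow> NN n (word_eval w) \<le> count_list w 0 \<and> MM n (word_eval w) \<le> length (filter (\<lambda>i. i \<noteq> 0) w)"
proof (induction w rule: rev_induct)
  case Nil
  then show ?case using NN_id[of n] MM_id[of n] by (simp add: id_def)
next
  case (snoc a w)
  define \<sigma> where "\<sigma> = word_eval w"
  have odd: "\<And>k. \<sigma> (-k) = - \<sigma> k" by (simp add: \<sigma>_def word_eval_odd)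
  have IH: "NN n \<sigma> \<le> count_list w 0" "MM n \<sigma> \<le> length (filter (\<lambda>i. i \<noteq> 0) w)"
    using snoc by (auto simp: \<sigma>_def)
  have an: "a < n" using snoc.prems by auto
  show ?case
  proof (cases "a = 0")
    case True
    have "NN n (\<sigma> \<circ> gen 0) \<le> NN n \<sigma> + 1"
      using NN_g0[of n \<sigma>, OF _ odd] an True by (auto split: if_splits)
    moreover have "MM n (\<sigma> \<circ> gen 0) = MM n \<sigma>" using MM_g0[of \<sigma>, OF odd] .
    moreover have eq: "word_eval (w @ [a]) = \<sigma> \<circ> gen 0" by (simp add: word_eval_snoc \<sigma>_def True)
    moreover have "count_list (w @ [a]) 0 = count_list w 0 + 1" "length (filter (\<lambda>i. i \<noteq> 0) (w @ [a])) = length (filter (\<lambda>i. i \<noteq> 0) w)"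
      using True by simp_all
    ultimately show ?thesis using IH unfolding eq by linarith
  next
    case False
    have "NN n (\<sigma> \<circ> gen a) = NN n \<sigma>" using NN_gi[of a n] an False by simp
    moreover have "MM n (\<sigma> \<circ> gen a) \<le> MM n \<sigma> + 1"
      using MM_gi[of a n \<sigma>] an False by (auto split: if_splits)
    moreover have eq: "word_eval (w @ [a]) = \<sigma> \<circ> gen a" by (simp add: word_eval_snoc \<sigma>_def)
    moreover have "count_list (w @ [a]) 0 = count_list w 0" "length (filter (\<lambda>i. i \<noteq> 0) (w @ [a])) = length (filter (\<lambda>i. i \<noteq> 0) w) + 1"
      using False by simp_all
    ultimately show ?thesis using IH unfolding eq by linarith
  qed
qed

lemma inj_ne: "inj f \<Longrightarrow> a \<noteq> b \<Longrightarrow> f a \<noteq> f b"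
  by (auto simp: inj_def)

lemma perm_incr_id:
  assumes s: "\<sigma> \<in> signed_perms n"
    and inc: "\<And>i. 1 \<le> i \<Longrightarrow> i < n \<Longrightarrow> \<sigma> (int i) \<le> \<sigma> (int i + 1)"
    and pos: "n \<ge> 1 \<Longrightarrow> \<sigma> 1 \<ge> 0"
  shows "\<sigma> = id"
proof -
  have inj: "inj \<sigma>" using perm_inj[OF s] .
  have ss: "\<And>k. k \<in> sset n \<Longrightarrow> \<sigma> k \<in> sset n" using perm_sset[OF s] .
  have ge: "\<sigma> (int j) \<ge> int j" if "1 \<le> j" "j \<le> n" for j
    using that
  proof (induction j rule: nat_induct_at_least)
    case base
    have "1 \<in> sset n" using base by (simp add: sset_iff)
    then have "\<sigma> 1 \<in> sset n" by (rule ss)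
    then show ?case using pos base by (auto simp: sset_iff)
  next
    case (Suc j)
    have jj: "1 \<le> j" "j < n" using Suc by auto
    have "\<sigma> (int j) \<le> \<sigma> (int j + 1)" by (rule inc[OF jj])
    moreover have "\<sigma> (int j) \<noteq> \<sigma> (int j + 1)" by (rule inj_ne[OF inj]) simp
    ultimately have "int j + 1 \<le> \<sigma> (int j + 1)" using Suc by linarith
    then show ?case by (simp add: algebra_simps)
  qed
  have le: "\<sigma> (int j) \<le> int j" if "1 \<le> j" "j \<le> n" for j
    using that(2)
  proof (induction j rule: inc_induct)
    case base
    have "int n \<in> sset n" using that by (simp add: sset_iff)
    then have "\<sigma> (int n) \<in> sset n" by (rule ss)
    then show ?case using abs_ge_self[of "\<sigma> (int n)"] unfolding sset_iff by linarith
  next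
    case (step j)
    show ?case
    proof (cases "j = 0")
      case True
      then show ?thesis using s perm_out[of \<sigma> n 0] by (simp add: sset_iff)
    next
      case False
      have jj: "1 \<le> j" "j < n" using False step.hyps by auto
      have "\<sigma> (int j) \<le> \<sigma> (int j + 1)" by (rule inc[OF jj])
      moreover have "\<sigma> (int j) \<noteq> \<sigma> (int j + 1)" by (rule inj_ne[OF inj]) simp
      moreover have "\<sigma> (int j + 1) \<le> int j + 1" using step.IH by (simp add: add.commute)
      ultimately show ?thesis by linarith
    qed
  qed
  have pos_eq: "\<sigma> k = k" if "1 \<le> k" "k \<le> int n" for k
  proof -
    define j where "j = nat k"
    have kj: "k = int j" using that(1) by (simp add: j_def)
    have "1 \<le> j" "j \<le> n" using that kj by linarith+
    then show ?thesis using ge[of j] le[of j] kj by simp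
  qed
  show ?thesis
  proof
    fix k
    show "\<sigma> k = id k"
    proof (cases "k \<in> sset n")
      case True
      then show ?thesis
      proof (cases "k > 0")
        case True
        then show ?thesis using pos_eq \<open>k \<in> sset n\<close> by (simp add: sset_iff)
      next
        case False
        then have "\<sigma> (-k) = -k" using pos_eq \<open>k \<in> sset n\<close> by (simp add: sset_iff)
        then show ?thesis using perm_odd[OF s, of "-k"] by simp
      qed
    next
      case False
      then show ?thesis using perm_out[OF s] by simp
    qed
  qed
qed

lemma word_exists:
  assumes "\<sigma> \<in> signed_perms n"
  shows "\<exists>w. set w \<subseteq> {0..<n} \<and> word_eval w = \<sigma> \<and> count_list w 0 = NN n \<sigma>
             \<and> length (filter (\<lambda>i. i \<noteq> 0) w) = MM n \<sigma>"
  using assms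
proof (induction "NN n \<sigma> + MM n \<sigma>" arbitrary: \<sigma> rule: less_induct)
  case less
  note s = less.prems
  have odd: "\<And>k. \<sigma> (-k) = - \<sigma> k" using perm_odd[OF s] .
  show ?case
  proof (cases "\<exists>i. 1 \<le> i \<and> i < n \<and> \<sigma> (int i + 1) < \<sigma> (int i)")
    case True
    then obtain i where i: "1 \<le> i" "i < n" "\<sigma> (int i + 1) < \<sigma> (int i)" by blast
    define \<tau> where "\<tau> = \<sigma> \<circ> gen i"
    have t: "\<tau> \<in> signed_perms n" unfolding \<tau>_def using s gen_perm[OF i(2)] by (rule perm_comp)
    have N: "NN n \<tau> = NN n \<sigma>" using NN_gi[OF i(1,2)] by (simp add: \<tau>_def)
    have M: "MM n \<tau> + 1 = MM n \<sigma>" using MM_gi[OF i(1,2), of \<sigma>] i(3) by (simp add: \<tau>_def)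
    obtain w where w: "set w \<subseteq> {0..<n}" "word_eval w = \<tau>" "count_list w 0 = NN n \<tau>"
        "length (filter (\<lambda>i. i \<noteq> 0) w) = MM n \<tau>"
      using less.hyps[OF _ t] N M by auto
    have "\<tau> \<circ> gen i = \<sigma>" by (auto simp: \<tau>_def gen_gen)
    then show ?thesis using w N M i
      by (intro exI[of _ "w @ [i]"]) (auto simp: word_eval_snoc)
  next
    case False
    note F = False
    show ?thesis
    proof (cases "n \<ge> 1 \<and> \<sigma> 1 < 0")
      case True
      define \<tau> where "\<tau> = \<sigma> \<circ> gen 0"
      have t: "\<tau> \<in> signed_perms n" unfolding \<tau>_def using s gen_perm[of 0 n] True by (auto intro: perm_comp)
      have N: "NN n \<tau> + 1 = NN n \<sigma>" using NN_g0[of n \<sigma>, OF _ odd] True by (simp add: \<tau>_def)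
      have M: "MM n \<tau> = MM n \<sigma>" using MM_g0[of \<sigma>, OF odd] by (simp add: \<tau>_def)
      obtain w where w: "set w \<subseteq> {0..<n}" "word_eval w = \<tau>" "count_list w 0 = NN n \<tau>"
          "length (filter (\<lambda>i. i \<noteq> 0) w) = MM n \<tau>"
        using less.hyps[OF _ t] N M by auto
      have "\<tau> \<circ> gen 0 = \<sigma>" by (auto simp: \<tau>_def gen_gen)
      then show ?thesis using w N M True
        by (intro exI[of _ "w @ [0]"]) (auto simp: word_eval_snoc)
    next
      case False
      have e: "\<sigma> = id"
      proof (rule perm_incr_id[OF s])
        fix i :: nat assume "1 \<le> i" "i < n"
        then show "\<sigma> (int i) \<le> \<sigma> (int i + 1)" using F by (meson not_less)
      next
        assume "n \<ge> 1" then show "\<sigma> 1 \<ge> 0" using False by (meson not_less)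
      qed
      have "NN n \<sigma> = 0" "MM n \<sigma> = 0" unfolding e by (rule NN_id, rule MM_id)
      then show ?thesis using e by (intro exI[of _ "[]"]) simp
    qed
  qed
qed

lemma length_split0: "length w = count_list w 0 + length (filter (\<lambda>i. i \<noteq> (0::nat)) w)"
  by (induction w) auto

lemma l1_l2:
  assumes s: "\<sigma> \<in> signed_perms n"
  shows "l1 n \<sigma> = NN n \<sigma> \<and> l2 n \<sigma> = MM n \<sigma>"
proof -
  obtain w0 where w0: "set w0 \<subseteq> {0..<n}" "word_eval w0 = \<sigma>" "count_list w0 0 = NN n \<sigma>"
      "length (filter (\<lambda>i. i \<noteq> 0) w0) = MM n \<sigma>"
    using word_exists[OF s] by blast
  let ?P = "\<lambda>w. set w \<subseteq> {0..<n} \<and> word_eval w = \<sigma>"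
  obtain wm where wm: "?P wm" "\<forall>y. ?P y \<longrightarrow> length wm \<le> length y"
    using ex_has_least_nat[of ?P w0 length] w0 by blast
  have "reduced_word n wm \<sigma>" using wm by (simp add: reduced_word_def)
  then have r: "reduced_word n (rword n \<sigma>) \<sigma>" unfolding rword_def by (rule someI)
  define r where "r = rword n \<sigma>"
  have rP: "?P r" "length r \<le> length w0" using r w0 by (auto simp: reduced_word_def r_def)
  have lb: "NN n \<sigma> \<le> count_list r 0" "MM n \<sigma> \<le> length (filter (\<lambda>i. i \<noteq> 0) r)"
    using word_lower[OF rP(1)[THEN conjunct1]] rP(1) by auto
  have "length w0 = NN n \<sigma> + MM n \<sigma>" using length_split0[of w0] w0 by simp
  then have "count_list r 0 = NN n \<sigma> \<and> length (filter (\<lambda>i. i \<noteq> 0) r) = MM n \<sigma>"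
    using rP(2) lb length_split0[of r] by linarith
  then show ?thesis by (simp add: l1_def l2_def r_def)
qed

definition Bs :: "('h \<Rightarrow> 'h) \<Rightarrow> bool \<Rightarrow> 'h \<Rightarrow> 'h" where
  "Bs bar b y = (if b then bar y else y)"

lemma act_word_Nil[simp]: "act_word bar [] xs = xs"
  by (simp add: act_word_def)
lemma act_word_Cons[simp]: "act_word bar (a # w) xs = act_gen bar a (act_word bar w xs)"
  by (simp add: act_word_def)
lemma act_word_append: "act_word bar (v @ w) xs = act_word bar v (act_word bar w xs)"
  by (simp add: act_word_def)

lemma length_act_gen[simp]: "length (act_gen bar a xs) = length xs"
  by (auto simp: act_gen_def split: list.splits)
lemma length_act_word[simp]: "length (act_word bar w xs) = length xs"
  by (induction w) auto

lemma act_gen_nth_pos: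
  assumes "1 \<le> a" "a < length ys" "j < length ys"
  shows "act_gen bar a ys ! j = ys ! (if j = a - 1 then a else if j = a then a - 1 else j)"
  using assms by (auto simp: act_gen_def nth_list_update)

lemma act_gen0_nth:
  assumes "j < length ys"
  shows "act_gen bar 0 ys ! j = (if j = 0 then bar (ys ! 0) else ys ! j)"
  using assms by (cases ys) (auto simp: act_gen_def nth_Cons split: nat.splits)

lemma act_formula:
  assumes bi: "\<And>h. bar (bar h) = h"
  shows "set w \<subseteq> {0..<n} \<Longrightarrow> length xs = n \<Longrightarrow> 1 \<le> k \<Longrightarrow> k \<le> int n \<Longrightarrow>
     act_word bar w xs ! (nat \<bar>word_eval w k\<bar> - 1) = Bs bar (word_eval w k < 0) (xs ! (nat k - 1))"
proof (induction w)
  case Nil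
  then show ?case by (simp add: Bs_def)
next
  case (Cons a w)
  define v where "v = word_eval w k"
  define ys where "ys = act_word bar w xs"
  have vs: "v \<in> sset n"
    unfolding v_def using Cons.prems by (intro perm_sset[OF word_perm]) (auto simp: sset_iff)
  have IH: "ys ! (nat \<bar>v\<bar> - 1) = Bs bar (v < 0) (xs ! (nat k - 1))"
    using Cons by (simp add: v_def ys_def)
  have ly: "length ys = n" using Cons.prems by (simp add: ys_def)
  have an: "a < n" using Cons.prems by auto
  have goal: "act_gen bar a ys ! (nat \<bar>gen a v\<bar> - 1) = Bs bar (gen a v < 0) (xs ! (nat k - 1))"
  proof (cases "a = 0")
    case True
    show ?thesis
    proof (cases "\<bar>v\<bar> = 1")
      case True
      then have "gen a v = - v" "nat \<bar>gen a v\<bar> - 1 = 0" "nat \<bar>v\<bar> - 1 = 0"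
        using \<open>a = 0\<close> by (auto simp: gen_simp)
      then show ?thesis using IH \<open>a = 0\<close> act_gen0_nth[of 0 ys bar] ly an True
        by (auto simp: Bs_def bi)
    next
      case False
      then have "gen a v = v" using \<open>a = 0\<close> by (auto simp: gen_simp)
      moreover have "nat \<bar>v\<bar> - 1 \<noteq> 0" "nat \<bar>v\<bar> - 1 < length ys" using False vs ly by (auto simp: sset_iff)
      ultimately show ?thesis using IH \<open>a = 0\<close> act_gen0_nth[of "nat \<bar>v\<bar> - 1" ys bar] by auto
    qed
  next
    case False
    have sg: "(gen a v < 0) = (v < 0)" using vs False by (auto simp: gen_simp sset_iff)
    have pos: "nat \<bar>gen a v\<bar> - 1 < length ys" using gen_sset[OF an vs] ly by (auto simp: sset_iff)
    have idx: "(if nat \<bar>gen a v\<bar> - 1 = a - 1 then a else if nat \<bar>gen a v\<bar> - 1 = a then a - 1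
                 else nat \<bar>gen a v\<bar> - 1) = nat \<bar>v\<bar> - 1"
      using False vs by (auto simp: gen_simp sset_iff) 
    show ?thesis
      using act_gen_nth_pos[of a ys "nat \<bar>gen a v\<bar> - 1" bar] False an ly pos idx IH sg by simp
  qed
  then show ?case by (simp add: v_def ys_def)
qed

lemma surj_pos:
  assumes "set w \<subseteq> {0..<n}" "p < n"
  shows "\<exists>k. 1 \<le> k \<and> k \<le> int n \<and> nat \<bar>word_eval w k\<bar> - 1 = p"
proof -
  define k' where "k' = word_eval (rev w) (int p + 1)"
  have sr: "set (rev w) \<subseteq> {0..<n}" using assms by auto
  have k's: "k' \<in> sset n" unfolding k'_def
    by (rule perm_sset[OF word_perm[OF sr]]) (use assms in \<open>simp add: sset_iff\<close>)
  have e: "word_eval w k' = int p + 1" unfolding k'_def by (rule word_eval_rev2)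
  show ?thesis
  proof (cases "k' > 0")
    case True
    then show ?thesis using k's e by (intro exI[of _ k']) (auto simp: sset_iff)
  next
    case False
    then show ?thesis using k's e word_eval_odd[of w k'] by (intro exI[of _ "-k'"]) (auto simp: sset_iff)
  qed
qed

lemma act_welldef:
  assumes bi: "\<And>h. bar (bar h) = h"
    and w1: "set w1 \<subseteq> {0..<n}" and w2: "set w2 \<subseteq> {0..<n}"
    and e: "word_eval w1 = word_eval w2" and l: "length xs = n"
  shows "act_word bar w1 xs = act_word bar w2 xs"
proof (rule nth_equalityI)
  show "length (act_word bar w1 xs) = length (act_word bar w2 xs)" by simp
next
  fix p assume "p < length (act_word bar w1 xs)"
  then have pn: "p < n" using l by simp
  obtain k where k: "1 \<le> k" "k \<le> int n" "nat \<bar>word_eval w1 k\<bar> - 1 = p"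
    using surj_pos[OF w1 pn] by blast
  have "act_word bar w1 xs ! p = Bs bar (word_eval w1 k < 0) (xs ! (nat k - 1))"
    using act_formula[OF bi w1 l k(1,2)] k(3) by simp
  moreover have "act_word bar w2 xs ! p = Bs bar (word_eval w1 k < 0) (xs ! (nat k - 1))"
    using act_formula[OF bi w2 l k(1,2)] k(3) e by simp
  ultimately show "act_word bar w1 xs ! p = act_word bar w2 xs ! p" by simp
qed

lemma rword_reduced:
  assumes s: "\<sigma> \<in> signed_perms n"
  shows "reduced_word n (rword n \<sigma>) \<sigma>"
proof -
  obtain w0 where w0: "set w0 \<subseteq> {0..<n}" "word_eval w0 = \<sigma>"
    using word_exists[OF s] by blast
  let ?P = "\<lambda>w. set w \<subseteq> {0..<n} \<and> word_eval w = \<sigma>"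
  obtain wm where wm: "?P wm" "\<forall>y. ?P y \<longrightarrow> length wm \<le> length y"
    using ex_has_least_nat[of ?P w0 length] w0 by blast
  have "reduced_word n wm \<sigma>" using wm by (simp add: reduced_word_def)
  then show ?thesis unfolding rword_def by (rule someI)
qed

lemma sigma_act_eq:
  assumes bi: "\<And>h. bar (bar h) = h"
    and w: "set w \<subseteq> {0..<n}" and l: "length xs = n"
  shows "sigma_act bar n (word_eval w) xs = act_word bar w xs"
proof -
  have r: "reduced_word n (rword n (word_eval w)) (word_eval w)"
    by (rule rword_reduced[OF word_perm[OF w]])
  show ?thesis unfolding sigma_act_def
    by (rule act_welldef[OF bi _ w _ l]) (use r in \<open>auto simp: reduced_word_def\<close>)
qed

lemma ip0_act_gen:
  assumes sa: "\<And>h k. ip (bar h) k = ip h (bar k)"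
    and a: "a < length xs" and l: "length ys = length xs"
  shows "ip0 ip (act_gen bar a xs) ys = ip0 ip xs (act_gen bar a ys)"
proof (cases "a = 0")
  case True
  obtain x0 xs' where xs: "xs = x0 # xs'" using a by (cases xs) auto
  obtain y0 ys' where ys: "ys = y0 # ys'" using a l by (cases ys) auto
  show ?thesis using True l unfolding xs ys
    by (simp add: ip0_def act_gen_def prod.lessThan_Suc_shift sa del: prod.lessThan_Suc)
next
  case False
  define t where "t = Transposition.transpose (a - 1) a"
  have tt: "\<And>i. t (t i) = i" by (simp add: t_def)
  have tl: "\<And>i. i < length xs \<Longrightarrow> t i < length xs" using a False by (auto simp: t_def Transposition.transpose_def)
  have bij: "bij_betw t {..<length xs} {..<length xs}"
    by (rule bij_betw_byWitness[where f'=t]) (use tt tl in auto)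
  have nx: "\<And>zs i. length zs = length xs \<Longrightarrow> i < length xs \<Longrightarrow> act_gen bar a zs ! i = zs ! t i"
    using a False by (auto simp: act_gen_nth_pos t_def Transposition.transpose_def)
  have "(\<Prod>i<length xs. ip (act_gen bar a xs ! i) (ys ! i)) = (\<Prod>i<length xs. ip (xs ! t i) (ys ! i))"
    by (rule prod.cong) (auto simp: nx)
  also have "\<dots> = (\<Prod>i<length xs. ip (xs ! t (t i)) (ys ! t i))"
    using prod.reindex_bij_betw[OF bij, of "\<lambda>i. ip (xs ! t i) (ys ! i)"] by simp
  also have "\<dots> = (\<Prod>i<length xs. ip (xs ! i) (act_gen bar a ys ! i))"
    by (rule prod.cong) (auto simp: nx l tt)
  finally show ?thesis using l by (simp add: ip0_def)
qed

lemma ip0_adjoint: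
  assumes sa: "\<And>h k. ip (bar h) k = ip h (bar k)"
  shows "set w \<subseteq> {0..<length xs} \<Longrightarrow> length ys = length xs \<Longrightarrow>
     ip0 ip (act_word bar w xs) ys = ip0 ip xs (act_word bar (rev w) ys)"
proof (induction w arbitrary: ys)
  case Nil
  then show ?case by simp
next
  case (Cons a w)
  have "ip0 ip (act_word bar (a # w) xs) ys = ip0 ip (act_gen bar a (act_word bar w xs)) ys" by simp
  also have "\<dots> = ip0 ip (act_word bar w xs) (act_gen bar a ys)"
    using Cons.prems by (intro ip0_act_gen[of ip bar, OF sa]) auto
  also have "\<dots> = ip0 ip xs (act_word bar (rev w) (act_gen bar a ys))"
    using Cons by simp
  also have "\<dots> = ip0 ip xs (act_word bar (rev (a # w)) ys)"
    by (simp add: act_word_append)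
  finally show ?case .
qed

lemma act_gen_snoc:
  "a < length ys \<Longrightarrow> act_gen bar a (ys @ [x]) = act_gen bar a ys @ [x]"
  by (cases ys) (auto simp: act_gen_def nth_append list_update_append split: nat.splits)

lemma act_word_snoc:
  "set w \<subseteq> {0..<length ys} \<Longrightarrow> act_word bar w (ys @ [x]) = act_word bar w ys @ [x]"
  by (induction w) (auto simp: act_gen_snoc)

lemma ip0_snoc:
  "length as = length bs \<Longrightarrow> ip0 ip (as @ [a]) (bs @ [b]) = ip0 ip as bs * ip a b"
  by (simp add: ip0_def nth_append)

definition rho :: "nat \<Rightarrow> int \<Rightarrow> int \<Rightarrow> int" where
  "rho n m p = (if p = int n then m else if p = - int n then - m
     else if 0 < p \<and> p < int n then (if p < \<bar>m\<bar> then p else p + 1)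
     else if - int n < p \<and> p < 0 then (if - p < \<bar>m\<bar> then p else p - 1)
     else p)"

definition Wd :: "nat \<Rightarrow> int \<Rightarrow> nat list" where
  "Wd n m = (if m > 0 then rev [nat m..<n] else rev [0..<n] @ [1..<nat \<bar>m\<bar>])"

lemma eval_upt:
  assumes "1 \<le> a" "a \<le> n"
  shows "word_eval [a..<n] p = (if p = int n then int a else if p = - int n then - int a
     else if int a \<le> p \<and> p < int n then p + 1 else if - int n < p \<and> p \<le> - int a then p - 1 else p)"
  using assms(2,1)
proof (induction a rule: inc_induct)
  case base
  then show ?case by simp
next
  case (step a)
  have "[a..<n] = a # [Suc a..<n]" using step.hyps by (simp add: upt_conv_Cons)
  then have "word_eval [a..<n] p = gen a (word_eval [Suc a..<n] p)" by simp
  also have "\<dots> = gen a (if p = int n then int (Suc a) else if p = - int n then - int (Suc a)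
     else if int (Suc a) \<le> p \<and> p < int n then p + 1 else if - int n < p \<and> p \<le> - int (Suc a) then p - 1 else p)"
    using step by simp
  finally show ?case using step by (simp add: gen_simp)
qed

lemma eval_rev_upt:
  "word_eval (rev [1..<k + 1]) p = (if p = 1 then int k + 1 else if p = -1 then - int k - 1
     else if 2 \<le> p \<and> p \<le> int k + 1 then p - 1 else if - int k - 1 \<le> p \<and> p \<le> -2 then p + 1 else p)"
proof (induction k arbitrary: p)
  case 0
  then show ?case by simp
next
  case (Suc k)
  have "[1..<Suc k + 1] = [1..<k + 1] @ [k + 1]" by simp
  then have "word_eval (rev [1..<Suc k + 1]) p = gen (k + 1) (word_eval (rev [1..<k + 1]) p)" by simp
  then show ?case using Suc by (simp add: gen_simp)
qed

lemma rho_eval: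
  assumes "n \<ge> 1" "m \<in> sset n"
  shows "word_eval (rev (Wd n m)) = rho n m"
proof
  fix p
  show "word_eval (rev (Wd n m)) p = rho n m p"
  proof (cases "m > 0")
    case True
    have a: "1 \<le> nat m" "nat m \<le> n" using assms True by (auto simp: sset_iff)
    show ?thesis using True eval_upt[OF a, of p] by (simp add: Wd_def rho_def)
  next
    case False
    define k where "k = nat \<bar>m\<bar> - 1"
    have k: "nat \<bar>m\<bar> = k + 1" "k < n" "m = - int k - 1" using assms False by (auto simp: sset_iff k_def)
    have "[0..<n] = 0 # [1..<n]" using assms by (simp add: upt_conv_Cons)
    then have "word_eval (rev (Wd n m)) p = word_eval (rev [1..<k + 1]) (gen 0 (word_eval [1..<n] p))"
      using False k by (simp add: Wd_def word_eval_append)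
    also have "\<dots> = rho n m p"
      using eval_upt[of 1 n p] eval_rev_upt[of k] assms k by (simp add: gen_simp rho_def)
    finally show ?thesis .
  qed
qed

lemma rho_mono:
  assumes "1 \<le> \<bar>m\<bar>" "\<bar>m\<bar> \<le> int n" "1 \<le> \<bar>a\<bar>" "\<bar>a\<bar> < int n" "1 \<le> \<bar>b\<bar>" "\<bar>b\<bar> < int n" "a < b"
  shows "rho n m a < rho n m b"
  using assms unfolding rho_def by (auto split: if_splits)

lemma rho_odd: "n \<ge> 1 \<Longrightarrow> rho n m (- a) = - rho n m a"
  unfolding rho_def by auto

lemma rho_less_iff:
  assumes "1 \<le> \<bar>m\<bar>" "\<bar>m\<bar> \<le> int n" "1 \<le> \<bar>a\<bar>" "\<bar>a\<bar> < int n" "1 \<le> \<bar>b\<bar>" "\<bar>b\<bar> < int n"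
  shows "(rho n m b < rho n m a) = (b < a)"
  using rho_mono[OF assms(1,2,3,4,5,6)] rho_mono[OF assms(1,2,5,6,3,4)]
  by (metis less_imp_not_less linorder_neqE_linordered_idom)

lemma phi_rho:
  assumes "1 \<le> \<bar>m\<bar>" "\<bar>m\<bar> \<le> int n" "1 \<le> \<bar>a\<bar>" "\<bar>a\<bar> < int n" "1 \<le> \<bar>b\<bar>" "\<bar>b\<bar> < int n"
  shows "phi (rho n m a) (rho n m b) = phi a b"
proof -
  have 1: "(rho n m b < rho n m a) = (b < a)" by (rule rho_less_iff[OF assms])
  have "(rho n m b < rho n m (-a)) = (b < -a)" by (rule rho_less_iff) (use assms in auto)
  moreover have "n \<ge> 1" using assms by linarith
  ultimately have 2: "(rho n m a + rho n m b < 0) = (a + b < 0)" by (simp add: rho_odd) linarith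
  show ?thesis unfolding phi_def 1 2 ..
qed

lemma rho_sign:
  assumes "1 \<le> \<bar>v\<bar>" "\<bar>v\<bar> < int n"
  shows "(rho n m v < 0) = (v < 0)"
  using assms unfolding rho_def by auto

lemma phi_rho_m:
  assumes "1 \<le> \<bar>m\<bar>" "\<bar>m\<bar> \<le> int n" "1 \<le> \<bar>v\<bar>" "\<bar>v\<bar> < int n"
  shows "phi (rho n m v) m = (if m > 0 then (if m \<le> \<bar>v\<bar> then 1 else 0) else 1 + (if \<bar>v\<bar> < \<bar>m\<bar> then 1 else 0))"
  using assms unfolding rho_def phi_def by (auto split: if_splits)

lemma NN_add:
  assumes t: "\<tau> \<in> signed_perms n0" and m: "m \<in> sset (Suc n0)"
  shows "NN (Suc n0) (rho (Suc n0) m \<circ> \<tau>) = NN n0 \<tau> + (if m < 0 then 1 else 0)"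
proof -
  have e: "{1..int (Suc n0)} = insert (int n0 + 1) {1..int n0}" by auto
  have tn: "\<tau> (int n0 + 1) = int n0 + 1" by (rule perm_out[OF t]) (simp add: sset_iff)
  have r: "(\<Sum>j\<in>{1..int n0}. if (rho (Suc n0) m \<circ> \<tau>) j < 0 then 1 else 0)
          = (\<Sum>j\<in>{1..int n0}. if \<tau> j < 0 then 1 else (0::nat))"
  proof (rule sum.cong)
    fix j assume "j \<in> {1..int n0}"
    then have "\<tau> j \<in> sset n0" by (intro perm_sset[OF t]) (simp add: sset_iff)
    then show "(if (rho (Suc n0) m \<circ> \<tau>) j < 0 then 1 else 0) = (if \<tau> j < 0 then 1 else (0::nat))"
      using rho_sign[of "\<tau> j" "Suc n0" m] by (simp add: sset_iff)
  qed simp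
  have "rho (Suc n0) m (int n0 + 1) = m" by (simp add: rho_def)
  then show ?thesis unfolding NN_def e using r tn by simp
qed

lemma abs_bij:
  assumes t: "\<tau> \<in> signed_perms n0"
  shows "bij_betw (\<lambda>i. \<bar>\<tau> i\<bar>) {1..int n0} {1..int n0}"
proof -
  have into: "(\<lambda>i. \<bar>\<tau> i\<bar>) ` {1..int n0} \<subseteq> {1..int n0}"
  proof
    fix u assume "u \<in> (\<lambda>i. \<bar>\<tau> i\<bar>) ` {1..int n0}"
    then obtain i where i: "i \<in> {1..int n0}" "u = \<bar>\<tau> i\<bar>" by blast
    have "\<tau> i \<in> sset n0" using i by (intro perm_sset[OF t]) (simp add: sset_iff)
    then show "u \<in> {1..int n0}" using i by (simp add: sset_iff)
  qed
  have inj: "inj_on (\<lambda>i. \<bar>\<tau> i\<bar>) {1..int n0}"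
  proof (rule inj_onI)
    fix i j assume ij: "i \<in> {1..int n0}" "j \<in> {1..int n0}" "\<bar>\<tau> i\<bar> = \<bar>\<tau> j\<bar>"
    then have "\<tau> i = \<tau> j \<or> \<tau> i = \<tau> (-j)" using perm_odd[OF t, of j] by (auto simp: abs_if split: if_splits)
    then have "i = j \<or> i = -j" using perm_inj[OF t] by (auto dest: injD)
    then show "i = j" using ij by auto
  qed
  show ?thesis unfolding bij_betw_def using inj endo_inj_surj[OF _ into inj] by simp
qed

lemma count_ge: "1 \<le> m \<Longrightarrow> m \<le> N + 1 \<Longrightarrow> (\<Sum>u\<in>{1..N}. if m \<le> u then 1 else (0::nat)) = nat (N + 1 - m)"
proof -
  assume a: "1 \<le> m" "m \<le> N + 1"
  have "(\<Sum>u\<in>{1..N}. if m \<le> u then 1 else (0::nat)) = card ({1..N} \<inter> Collect ((\<le>) m))"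
    by (simp add: sum.If_cases)
  also have "{1..N} \<inter> Collect ((\<le>) m) = {m..N}" using a by auto
  finally show ?thesis by simp
qed

lemma count_lt: "1 \<le> m \<Longrightarrow> (\<Sum>u\<in>{1..N}. if u < m then 1 else (0::nat)) = nat (min N (m - 1))"
proof -
  assume a: "1 \<le> m"
  have "(\<Sum>u\<in>{1..N}. if u < m then 1 else (0::nat)) = card ({1..N} \<inter> {u. u < m})"
    by (simp add: sum.If_cases)
  also have "{1..N} \<inter> {u. u < m} = {1..min N (m - 1)}" using a by auto
  finally show ?thesis by simp
qed

lemma MM_add:
  assumes t: "\<tau> \<in> signed_perms n0" and m: "m \<in> sset (Suc n0)"
  shows "MM (Suc n0) (rho (Suc n0) m \<circ> \<tau>) = MM n0 \<tau> + (if m > 0 then Suc n0 - nat m else n0 + (nat \<bar>m\<bar> - 1))"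
proof -
  let ?r = "rho (Suc n0) m"
  let ?N = "int n0"
  define A where "A = (\<lambda>i. (i, ?N + 1)) ` {1..?N}"
  have PP: "Pairs (Suc n0) = Pairs n0 \<union> A" unfolding A_def Pairs_def by auto
  have disj: "Pairs n0 \<inter> A = {}" unfolding A_def Pairs_def by auto
  have fA: "finite A" unfolding A_def by simp
  have ms: "1 \<le> \<bar>m\<bar>" "\<bar>m\<bar> \<le> int (Suc n0)" using m by (auto simp: sset_iff)
  have ts: "\<And>k. 1 \<le> k \<Longrightarrow> k \<le> ?N \<Longrightarrow> 1 \<le> \<bar>\<tau> k\<bar> \<and> \<bar>\<tau> k\<bar> \<le> ?N"
    using perm_sset[OF t] by (simp add: sset_iff)
  have S1: "(\<Sum>p\<in>Pairs n0. phi ((?r \<circ> \<tau>) (fst p)) ((?r \<circ> \<tau>) (snd p))) = MM n0 \<tau>"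
    unfolding MM_def
  proof (rule sum.cong)
    fix p assume "p \<in> Pairs n0"
    then have "1 \<le> fst p" "fst p \<le> ?N" "1 \<le> snd p" "snd p \<le> ?N" by (auto simp: Pairs_def)
    then have a: "1 \<le> \<bar>\<tau> (fst p)\<bar>" "\<bar>\<tau> (fst p)\<bar> < int (Suc n0)" "1 \<le> \<bar>\<tau> (snd p)\<bar>" "\<bar>\<tau> (snd p)\<bar> < int (Suc n0)"
      using ts by force+
    show "phi ((?r \<circ> \<tau>) (fst p)) ((?r \<circ> \<tau>) (snd p)) = phi (\<tau> (fst p)) (\<tau> (snd p))"
      using phi_rho[OF ms a] by simp
  qed simp
  have tn: "\<tau> (?N + 1) = ?N + 1" by (rule perm_out[OF t]) (simp add: sset_iff)
  have rn: "?r (?N + 1) = m" by (simp add: rho_def)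
  define g where "g = (\<lambda>u. if m > 0 then (if m \<le> u then 1 else 0) else 1 + (if u < \<bar>m\<bar> then 1 else (0::nat)))"
  have "(\<Sum>p\<in>A. phi ((?r \<circ> \<tau>) (fst p)) ((?r \<circ> \<tau>) (snd p))) = (\<Sum>i\<in>{1..?N}. phi (?r (\<tau> i)) m)"
    unfolding A_def by (subst sum.reindex) (auto intro: inj_onI simp: tn rn)
  also have "\<dots> = (\<Sum>i\<in>{1..?N}. g \<bar>\<tau> i\<bar>)"
  proof (rule sum.cong)
    fix i assume "i \<in> {1..?N}"
    then have a: "1 \<le> \<bar>\<tau> i\<bar>" "\<bar>\<tau> i\<bar> < int (Suc n0)" using ts by force+
    show "phi (?r (\<tau> i)) m = g \<bar>\<tau> i\<bar>" using phi_rho_m[OF ms a] by (simp add: g_def)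
  qed simp
  also have "\<dots> = (\<Sum>u\<in>{1..?N}. g u)"
    using sum.reindex_bij_betw[OF abs_bij[OF t], of g] .
  also have "\<dots> = (if m > 0 then Suc n0 - nat m else n0 + (nat \<bar>m\<bar> - 1))"
  proof (cases "m > 0")
    case True
    then have "(\<Sum>u\<in>{1..?N}. g u) = (\<Sum>u\<in>{1..?N}. if m \<le> u then 1 else (0::nat))" by (simp add: g_def)
    also have "\<dots> = nat (?N + 1 - m)" by (rule count_ge) (use True ms in auto)
    finally show ?thesis using True by simp
  next
    case False
    then have "(\<Sum>u\<in>{1..?N}. g u) = (\<Sum>u\<in>{1..?N}. 1 + (if u < \<bar>m\<bar> then 1 else (0::nat)))" by (simp add: g_def)
    also have "\<dots> = n0 + (\<Sum>u\<in>{1..?N}. if u < \<bar>m\<bar> then 1 else (0::nat))" by (subst sum.distrib) simp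
    also have "\<dots> = n0 + nat (min ?N (\<bar>m\<bar> - 1))" using count_lt[OF ms(1)] by simp
    also have "min ?N (\<bar>m\<bar> - 1) = \<bar>m\<bar> - 1" using ms by simp
    also have "nat (\<bar>m\<bar> - 1) = nat \<bar>m\<bar> - 1" using ms by (simp add: nat_diff_distrib)
    finally show ?thesis using False by simp
  qed
  finally have S2: "(\<Sum>p\<in>A. phi ((?r \<circ> \<tau>) (fst p)) ((?r \<circ> \<tau>) (snd p))) = (if m > 0 then Suc n0 - nat m else n0 + (nat \<bar>m\<bar> - 1))" .
  show ?thesis unfolding MM_def PP sum.union_disjoint[OF finite_Pairs fA disj]
    using S1 S2 by (simp add: MM_def)
qed

lemma finite_sset[simp]: "finite (sset n)"
proof -
  have "sset n \<subseteq> {- int n..int n}" by (auto simp: sset_iff)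
  then show ?thesis using finite_subset by blast
qed

lemma perm_ext:
  assumes t: "\<tau> \<in> signed_perms n0"
  shows "\<tau> \<in> signed_perms (Suc n0)"
proof -
  have e: "sset (Suc n0) = sset n0 \<union> {int n0 + 1, - int n0 - 1}" by (auto simp: sset_iff)
  have f: "\<tau> (int n0 + 1) = int n0 + 1" "\<tau> (- int n0 - 1) = - int n0 - 1"
    by (rule perm_out[OF t], simp add: sset_iff)+
  have im: "\<tau> ` sset n0 = sset n0" using t unfolding signed_perms_def bij_betw_def by auto
  have io: "inj_on \<tau> (sset (Suc n0))" using perm_inj[OF t] by (rule inj_on_subset) simp
  have "\<tau> ` sset (Suc n0) = sset (Suc n0)" unfolding e image_Un using im f by simp
  then have "bij_betw \<tau> (sset (Suc n0)) (sset (Suc n0))"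
    unfolding bij_betw_def using io by simp
  moreover have "\<forall>k\<in>sset (Suc n0). \<tau> (- k) = - \<tau> k" using perm_odd[OF t] by auto
  moreover have "\<forall>k. k \<notin> sset (Suc n0) \<longrightarrow> \<tau> k = k" using perm_out[OF t] e by auto
  ultimately show ?thesis by (simp add: signed_perms_def)
qed

lemma perm_restr:
  assumes s: "\<sigma> \<in> signed_perms (Suc n0)" and fx: "\<sigma> (int n0 + 1) = int n0 + 1"
  shows "\<sigma> \<in> signed_perms n0"
proof -
  have fx2: "\<sigma> (- int n0 - 1) = - int n0 - 1" using perm_odd[OF s, of "int n0 + 1"] fx by simp
  have inj: "inj \<sigma>" by (rule perm_inj[OF s])
  have into: "\<sigma> ` sset n0 \<subseteq> sset n0"
  proof
    fix y assume "y \<in> \<sigma> ` sset n0"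
    then obtain k where k: "k \<in> sset n0" "y = \<sigma> k" by blast
    have "k \<in> sset (Suc n0)" using k by (auto simp: sset_iff)
    then have "y \<in> sset (Suc n0)" using perm_sset[OF s] k by simp
    moreover have kn: "k \<noteq> int n0 + 1" "k \<noteq> - int n0 - 1" using k by (auto simp: sset_iff)
    moreover have "y \<noteq> int n0 + 1" using k(2) fx inj_ne[OF inj kn(1)] by simp
    moreover have "y \<noteq> - int n0 - 1" using k(2) fx2 inj_ne[OF inj kn(2)] by simp
    ultimately show "y \<in> sset n0" by (auto simp: sset_iff)
  qed
  have io: "inj_on \<sigma> (sset n0)" using inj by (rule inj_on_subset) simp
  have "bij_betw \<sigma> (sset n0) (sset n0)"
    unfolding bij_betw_def using io endo_inj_surj[OF finite_sset into io] by simp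
  moreover have "\<forall>k\<in>sset n0. \<sigma> (- k) = - \<sigma> k" using perm_odd[OF s] by auto
  moreover have "\<forall>k. k \<notin> sset n0 \<longrightarrow> \<sigma> k = k"
  proof (intro allI impI)
    fix k assume "k \<notin> sset n0"
    then have "k \<notin> sset (Suc n0) \<or> k = int n0 + 1 \<or> k = - int n0 - 1" by (auto simp: sset_iff)
    then show "\<sigma> k = k" using perm_out[OF s] fx fx2 by auto
  qed
  ultimately show ?thesis by (simp add: signed_perms_def)
qed

lemma set_Wd: "m \<in> sset n \<Longrightarrow> set (Wd n m) \<subseteq> {0..<n}"
  by (auto simp: Wd_def sset_iff)

lemma decomp_bij:
  assumes n: "n = Suc n0"
  shows "bij_betw (\<lambda>(m, \<tau>). rho n m \<circ> \<tau>) (sset n \<times> signed_perms n0) (signed_perms n)"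
proof (rule bij_betw_byWitness[where f'="\<lambda>\<sigma>. (\<sigma> (int n), word_eval (Wd n (\<sigma> (int n))) \<circ> \<sigma>)"])
  have n1: "n \<ge> 1" using n by simp
  have rev_ok: "\<And>m. m \<in> sset n \<Longrightarrow> rho n m = word_eval (rev (Wd n m))"
    using rho_eval[OF n1] by simp
  show "\<forall>a\<in>sset n \<times> signed_perms n0.
      (\<lambda>\<sigma>. (\<sigma> (int n), word_eval (Wd n (\<sigma> (int n))) \<circ> \<sigma>)) ((\<lambda>(m, \<tau>). rho n m \<circ> \<tau>) a) = a"
  proof
    fix a assume "a \<in> sset n \<times> signed_perms n0"
    then obtain m \<tau> where a: "a = (m, \<tau>)" "m \<in> sset n" "\<tau> \<in> signed_perms n0" by blast
    have tn: "\<tau> (int n) = int n" using perm_out[OF a(3)] n by (simp add: sset_iff)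
    have rn: "rho n m (int n) = m" by (simp add: rho_def)
    have "word_eval (Wd n m) \<circ> (rho n m \<circ> \<tau>) = \<tau>"
      using rev_ok[OF a(2)] word_eval_rev[of "rev (Wd n m)"] by (auto simp: fun_eq_iff)
    then show "(\<lambda>\<sigma>. (\<sigma> (int n), word_eval (Wd n (\<sigma> (int n))) \<circ> \<sigma>)) ((\<lambda>(m, \<tau>). rho n m \<circ> \<tau>) a) = a"
      using a tn rn by simp
  qed
  show "\<forall>b\<in>signed_perms n. (\<lambda>(m, \<tau>). rho n m \<circ> \<tau>) ((\<lambda>\<sigma>. (\<sigma> (int n), word_eval (Wd n (\<sigma> (int n))) \<circ> \<sigma>)) b) = b"
  proof
    fix \<sigma> assume s: "\<sigma> \<in> signed_perms n"
    have ms: "\<sigma> (int n) \<in> sset n" using perm_sset[OF s] n1 by (simp add: sset_iff)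
    show "(\<lambda>(m, \<tau>). rho n m \<circ> \<tau>) ((\<lambda>\<sigma>. (\<sigma> (int n), word_eval (Wd n (\<sigma> (int n))) \<circ> \<sigma>)) \<sigma>) = \<sigma>"
      using rev_ok[OF ms] word_eval_rev[of "Wd n (\<sigma> (int n))"] by (auto simp: fun_eq_iff)
  qed
  show "(\<lambda>(m, \<tau>). rho n m \<circ> \<tau>) ` (sset n \<times> signed_perms n0) \<subseteq> signed_perms n"
  proof
    fix y assume "y \<in> (\<lambda>(m, \<tau>). rho n m \<circ> \<tau>) ` (sset n \<times> signed_perms n0)"
    then obtain m \<tau> where y: "y = rho n m \<circ> \<tau>" "m \<in> sset n" "\<tau> \<in> signed_perms n0" by auto
    have "rho n m \<in> signed_perms n"
      using rev_ok[OF y(2)] word_perm[of "rev (Wd n m)" n] set_Wd[OF y(2)] by simp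
    moreover have "\<tau> \<in> signed_perms n" using perm_ext[OF y(3)] n by simp
    ultimately show "y \<in> signed_perms n" using y(1) perm_comp by blast
  qed
  show "(\<lambda>\<sigma>. (\<sigma> (int n), word_eval (Wd n (\<sigma> (int n))) \<circ> \<sigma>)) ` signed_perms n \<subseteq> sset n \<times> signed_perms n0"
  proof
    fix y assume "y \<in> (\<lambda>\<sigma>. (\<sigma> (int n), word_eval (Wd n (\<sigma> (int n))) \<circ> \<sigma>)) ` signed_perms n"
    then obtain \<sigma> where y: "y = (\<sigma> (int n), word_eval (Wd n (\<sigma> (int n))) \<circ> \<sigma>)" "\<sigma> \<in> signed_perms n" by blast
    define m where "m = \<sigma> (int n)"
    have ms: "m \<in> sset n" using perm_sset[OF y(2)] n1 by (simp add: sset_iff m_def)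
    have t: "word_eval (Wd n m) \<circ> \<sigma> \<in> signed_perms n"
      by (rule perm_comp[OF word_perm[OF set_Wd[OF ms]] y(2)])
    have "word_eval (Wd n m) m = word_eval (Wd n m) (rho n m (int n))" by (simp add: rho_def)
    also have "\<dots> = int n" using rev_ok[OF ms] word_eval_rev[of "rev (Wd n m)"] by simp
    finally have fx: "(word_eval (Wd n m) \<circ> \<sigma>) (int n0 + 1) = int n0 + 1" using n by (simp add: m_def add.commute)
    have "word_eval (Wd n m) \<circ> \<sigma> \<in> signed_perms n0" by (rule perm_restr) (use t fx n in auto)
    then show "y \<in> sset n \<times> signed_perms n0" using y ms by (simp add: m_def)
  qed
qed

lemma sum_decomp:
  assumes n: "n = Suc n0"
  shows "(\<Sum>\<sigma>\<in>signed_perms n. F \<sigma>) = (\<Sum>m\<in>sset n. \<Sum>\<tau>\<in>signed_perms n0. F (rho n m \<circ> \<tau>))"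
proof -
  have "(\<Sum>\<sigma>\<in>signed_perms n. F \<sigma>) = (\<Sum>p\<in>sset n \<times> signed_perms n0. F ((\<lambda>(m, \<tau>). rho n m \<circ> \<tau>) p))"
    using sum.reindex_bij_betw[OF decomp_bij[OF n], of F] by simp
  also have "\<dots> = (\<Sum>m\<in>sset n. \<Sum>\<tau>\<in>signed_perms n0. F (rho n m \<circ> \<tau>))"
    by (simp add: sum.cartesian_product case_prod_unfold)
  finally show ?thesis .
qed

lemma fip_append_left: "fip E (A @ B) G = fip E A G + fip E B G"
  by (simp add: fip_def)

lemma fip_Cons_left: "fip E (p # A) G = (\<Sum>(d, ys)\<leftarrow>G. cnj (fst p) * d * E (snd p) ys) + fip E A G"
  by (cases p) (simp add: fip_def)

lemma fip_scale_left:
  "fip E (map (\<lambda>(d, ys). (c * d, ys)) L) G = cnj c * fip E L G"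
proof (induction L)
  case Nil
  then show ?case by (simp add: fip_def)
next
  case (Cons p L)
  obtain d ys where p: "p = (d, ys)" by (cases p)
  have "(\<Sum>(e, zs)\<leftarrow>G. cnj (c * d) * e * E ys zs) = cnj c * (\<Sum>(e, zs)\<leftarrow>G. cnj d * e * E ys zs)"
    by (simp add: sum_list_const_mult[symmetric] split_def mult.assoc)
  then show ?case using Cons by (simp add: fip_Cons_left p algebra_simps)
qed

lemma fip_fop_left: "fip E (fop T F) G = (\<Sum>(c, xs)\<leftarrow>F. cnj c * fip E (T xs) G)"
proof (induction F)
  case Nil
  then show ?case by (simp add: fip_def fop_def)
next
  case (Cons p F)
  obtain c xs where p: "p = (c, xs)" by (cases p)
  have "fop T (p # F) = map (\<lambda>(d, ys). (c * d, ys)) (T xs) @ fop T F" by (simp add: fop_def p)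
  then show ?case using Cons by (simp add: fip_append_left fip_scale_left p)
qed

lemma fip_right_single: "fip E F G = (\<Sum>(d, ys)\<leftarrow>G. d * fip E F [(1, ys)])"
proof -
  have "fip E F G = (\<Sum>(c, xs)\<leftarrow>F. \<Sum>(d, ys)\<leftarrow>G. cnj c * d * E xs ys)" by (simp add: fip_def)
  also have "\<dots> = (\<Sum>(d, ys)\<leftarrow>G. \<Sum>(c, xs)\<leftarrow>F. cnj c * d * E xs ys)"
    by (induction F) (auto simp: split_def sum_list_addf)
  also have "\<dots> = (\<Sum>(d, ys)\<leftarrow>G. d * fip E F [(1, ys)])"
    by (simp add: fip_def split_def sum_list_const_mult[symmetric] algebra_simps)
  finally show ?thesis .
qed

lemma fop_append: "fop T (A @ B) = fop T A @ fop T B"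
  by (simp add: fop_def)

lemma fop_scale: "fop T (map (\<lambda>(d, ys). (c * d, ys)) L) = map (\<lambda>(e, zs). (c * e, zs)) (fop T L)"
  by (induction L) (auto simp: fop_def split_def mult.assoc)

lemma fop_fop: "fop T (fop S F) = fop (\<lambda>xs. fop T (S xs)) F"
proof (induction F)
  case Nil
  then show ?case by (simp add: fop_def)
next
  case (Cons p F)
  obtain c xs where p: "p = (c, xs)" by (cases p)
  have "fop S (p # F) = map (\<lambda>(d, ys). (c * d, ys)) (S xs) @ fop S F" by (simp add: fop_def p)
  then show ?case using Cons by (simp add: fop_append fop_scale) (simp add: fop_def p)
qed

lemma fip_rann:
  assumes "\<forall>(c, zs)\<in>set R. zs \<noteq> []"
  shows "fip E (fop (rann ip x) R) [(1, ys)] = (\<Sum>(c, zs)\<leftarrow>R. cnj c * cnj (ip x (last zs)) * E (butlast zs) ys)"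
  using assms by (induction R) (auto simp: fip_def fop_def rann_def)

definition cnt :: "nat \<Rightarrow> int \<Rightarrow> nat" where
  "cnt n m = (if m > 0 then n - nat m else n - 1 + (nat \<bar>m\<bar> - 1))"

definition cf :: "real \<Rightarrow> real \<Rightarrow> nat \<Rightarrow> int \<Rightarrow> complex" where
  "cf \<alpha> q n m = complex_of_real \<alpha> ^ (if m < 0 then 1 else 0) * complex_of_real q ^ cnt n m"

lemma sset_split:
  assumes n: "n = Suc n0"
  shows "sset n = insert (int n) (insert (-1) ((\<lambda>k. int n - int k) ` {1..<n} \<union> (\<lambda>k. - int k - 1) ` {1..<n}))"
proof
  show "sset n \<subseteq> insert (int n) (insert (-1) ((\<lambda>k. int n - int k) ` {1..<n} \<union> (\<lambda>k. - int k - 1) ` {1..<n}))"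
  proof
    fix m assume m: "m \<in> sset n"
    show "m \<in> insert (int n) (insert (-1) ((\<lambda>k. int n - int k) ` {1..<n} \<union> (\<lambda>k. - int k - 1) ` {1..<n}))"
    proof (cases "m > 0")
      case True
      show ?thesis
      proof (cases "m = int n")
        case False
        then have "m = int n - int (n - nat m)" "n - nat m \<in> {1..<n}" using m True by (auto simp: sset_iff)
        then show ?thesis by blast
      qed simp
    next
      case False
      show ?thesis
      proof (cases "m = -1")
        case False
        then have "m = - int (nat (- m) - 1) - 1" "nat (- m) - 1 \<in> {1..<n}" using m \<open>\<not> m > 0\<close> by (auto simp: sset_iff)
        then show ?thesis by blast
      qed simp
    qed
  qed
next
  show "insert (int n) (insert (-1) ((\<lambda>k. int n - int k) ` {1..<n} \<union> (\<lambda>k. - int k - 1) ` {1..<n})) \<subseteq> sset n"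
    using n by (auto simp: sset_iff)
qed

lemma Rop_sum:
  assumes n: "n = Suc n0"
  shows "(\<Sum>(c, zs)\<leftarrow>Rop bar \<alpha> q n xs. H c zs) = (\<Sum>m\<in>sset n. H (cf \<alpha> q n m) (act_word bar (Wd n m) xs))"
proof -
  define G where "G m = H (cf \<alpha> q n m) (act_word bar (Wd n m) xs)" for m
  let ?A = "(\<lambda>k. int n - int k) ` {1..<n}"
  let ?B = "(\<lambda>k. - int k - 1) ` {1..<n}"
  have p1: "H 1 xs = G (int n)" by (simp add: G_def cf_def cnt_def Wd_def)
  have p2: "(\<Sum>(c, zs)\<leftarrow>map (\<lambda>k. (complex_of_real q ^ k, act_word bar (rev [n - k..<n]) xs)) [1..<n]. H c zs)
      = (\<Sum>k\<in>{1..<n}. G (int n - int k))"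
  proof -
    have "(\<Sum>(c, zs)\<leftarrow>map (\<lambda>k. (complex_of_real q ^ k, act_word bar (rev [n - k..<n]) xs)) [1..<n]. H c zs)
        = (\<Sum>k\<leftarrow>[1..<n]. G (int n - int k))"
      by (rule arg_cong[where f=sum_list]) (auto simp: G_def cf_def cnt_def Wd_def nat_diff_distrib)
    then show ?thesis by (simp add: sum_set_upt_conv_sum_list_nat[symmetric])
  qed
  have p3: "H (complex_of_real \<alpha> * complex_of_real q ^ (n - 1)) (act_word bar (rev [0..<n]) xs) = G (-1)"
    by (simp add: G_def cf_def cnt_def Wd_def)
  have p4: "(\<Sum>(c, zs)\<leftarrow>map (\<lambda>k. (complex_of_real \<alpha> * complex_of_real q ^ (n - 1) * complex_of_real q ^ k,
                  act_word bar (rev [0..<n] @ [1..<k + 1]) xs)) [1..<n]. H c zs)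
      = (\<Sum>k\<in>{1..<n}. G (- int k - 1))"
  proof -
    have "(\<Sum>(c, zs)\<leftarrow>map (\<lambda>k. (complex_of_real \<alpha> * complex_of_real q ^ (n - 1) * complex_of_real q ^ k,
                  act_word bar (rev [0..<n] @ [1..<k + 1]) xs)) [1..<n]. H c zs)
        = (\<Sum>k\<leftarrow>[1..<n]. G (- int k - 1))"
    proof -
      have eq: "(\<lambda>(c, zs). H c zs) (complex_of_real \<alpha> * complex_of_real q ^ (n - 1) * complex_of_real q ^ k,
                  act_word bar (rev [0..<n] @ [1..<k + 1]) xs) = G (- int k - 1)" if "k \<in> set [1..<n]" for k
      proof -
        have "nat \<bar>- int k - 1\<bar> = k + 1" "cnt n (- int k - 1) = n - 1 + k" using that by (auto simp: cnt_def)
        then show ?thesis by (simp add: G_def cf_def Wd_def power_add mult.assoc)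
      qed
      show ?thesis unfolding map_map
        by (rule arg_cong[where f=sum_list], rule map_cong) (rule refl, simp only: comp_apply, erule eq)
    qed
    then show ?thesis by (simp add: sum_set_upt_conv_sum_list_nat[symmetric])
  qed
  have injA: "inj_on (\<lambda>k. int n - int k) {1..<n}" by (auto intro: inj_onI)
  have injB: "inj_on (\<lambda>k. - int k - 1) {1..<n}" by (auto intro: inj_onI)
  have d1: "int n \<notin> insert (-1) (?A \<union> ?B)" by auto
  have d2: "-1 \<notin> ?A \<union> ?B" by auto
  have d3: "?A \<inter> ?B = {}" by auto
  have "(\<Sum>m\<in>sset n. G m) = G (int n) + (G (-1) + ((\<Sum>m\<in>?A. G m) + (\<Sum>m\<in>?B. G m)))"
    unfolding sset_split[OF n]
    by (subst sum.insert, simp, rule d1, subst sum.insert, simp, rule d2, subst sum.union_disjoint) (auto simp: d3)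
  also have "\<dots> = G (int n) + (G (-1) + ((\<Sum>k\<in>{1..<n}. G (int n - int k)) + (\<Sum>k\<in>{1..<n}. G (- int k - 1))))"
    by (simp only: sum.reindex[OF injA] sum.reindex[OF injB] comp_def)
  finally have S: "(\<Sum>m\<in>sset n. G m) = \<dots>" .
  have R: "(\<Sum>(c, zs)\<leftarrow>Rop bar \<alpha> q n xs. H c zs) = H 1 xs +
     ((\<Sum>(c, zs)\<leftarrow>map (\<lambda>k. (complex_of_real q ^ k, act_word bar (rev [n - k..<n]) xs)) [1..<n]. H c zs) +
     (H (complex_of_real \<alpha> * complex_of_real q ^ (n - 1)) (act_word bar (rev [0..<n]) xs) +
     (\<Sum>(c, zs)\<leftarrow>map (\<lambda>k. (complex_of_real \<alpha> * complex_of_real q ^ (n - 1) * complex_of_real q ^ k,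
                  act_word bar (rev [0..<n] @ [1..<k + 1]) xs)) [1..<n]. H c zs)))"
    by (simp only: Rop_def map_append sum_list_append list.map sum_list.Cons sum_list.Nil prod.case add_0_right)
  show ?thesis unfolding R p1 p2 p3 p4 S G_def[symmetric] by (simp add: ac_simps)
qed

lemma hip_cnj: "cnj (hip h k) = hip k h"
  by (simp add: hip_def complex_eq_iff inner_commute)

lemma ipaq_zero:
  assumes "length xs \<noteq> length ys"
  shows "ipaq ip bar \<alpha> q xs ys = 0"
  unfolding ipaq_def by (rule sum.neutral) (use assms in \<open>simp add: ip0_def sigma_act_def\<close>)

lemma cnj_cf: "cnj (cf \<alpha> q n m) = cf \<alpha> q n m"
  by (simp add: cf_def)

lemma rho_comp_perm:
  assumes n: "n = Suc n0" and t: "\<tau> \<in> signed_perms n0" and m: "m \<in> sset n"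
  shows "rho n m \<circ> \<tau> \<in> signed_perms n"
proof -
  have "rho n m = word_eval (rev (Wd n m))" using rho_eval[of n m] n m by simp
  then have "rho n m \<in> signed_perms n" using word_perm[of "rev (Wd n m)" n] set_Wd[OF m] by simp
  moreover have "\<tau> \<in> signed_perms n" using perm_ext[OF t] n by simp
  ultimately show ?thesis by (rule perm_comp)
qed

lemma cf_mult:
  assumes n: "n = Suc n0" and t: "\<tau> \<in> signed_perms n0" and m: "m \<in> sset n"
  shows "cf \<alpha> q n m * (complex_of_real \<alpha> ^ l1 n0 \<tau> * complex_of_real q ^ l2 n0 \<tau>)
       = complex_of_real \<alpha> ^ l1 n (rho n m \<circ> \<tau>) * complex_of_real q ^ l2 n (rho n m \<circ> \<tau>)"
proof -
  have s: "rho n m \<circ> \<tau> \<in> signed_perms n" by (rule rho_comp_perm[OF n t m])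
  have a: "l1 n (rho n m \<circ> \<tau>) = l1 n0 \<tau> + (if m < 0 then 1 else 0)"
    using l1_l2[OF s] l1_l2[OF t] NN_add[OF t, of m] m n by simp
  have b: "l2 n (rho n m \<circ> \<tau>) = l2 n0 \<tau> + cnt n m"
    using l1_l2[OF s] l1_l2[OF t] MM_add[OF t, of m] m n by (simp add: cnt_def)
  show ?thesis unfolding a b cf_def by (simp add: power_add)
qed

lemma term_eq:
  assumes bi: "\<And>h. bar (bar h) = h" and sa: "\<And>h k. ip (bar h) k = ip h (bar k)"
    and n: "n = Suc n0" and t: "\<tau> \<in> signed_perms n0" and m: "m \<in> sset n"
    and lx: "length xs = n" and ly: "length ys = n0"
  shows "ip0 ip (butlast (act_word bar (Wd n m) xs)) (sigma_act bar n0 \<tau> ys) * ip (last (act_word bar (Wd n m) xs)) x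
       = ip0 ip xs (sigma_act bar n (rho n m \<circ> \<tau>) (ys @ [x]))"
proof -
  define zs where "zs = act_word bar (Wd n m) xs"
  define r where "r = rword n0 \<tau>"
  have rr: "reduced_word n0 r \<tau>" unfolding r_def by (rule rword_reduced[OF t])
  have rs: "set r \<subseteq> {0..<n0}" and re: "word_eval r = \<tau>" using rr by (auto simp: reduced_word_def)
  have lz: "length zs = n" using lx by (simp add: zs_def)
  have zne: "zs \<noteq> []" using lz n by auto
  have zsplit: "zs = butlast zs @ [last zs]" using zne by simp
  have "ip0 ip (butlast zs) (sigma_act bar n0 \<tau> ys) * ip (last zs) x
      = ip0 ip (butlast zs @ [last zs]) (sigma_act bar n0 \<tau> ys @ [x])"
    by (rule ip0_snoc[symmetric]) (use lz ly n in \<open>simp add: sigma_act_def\<close>)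
  also have "\<dots> = ip0 ip zs (act_word bar r (ys @ [x]))"
    using zsplit act_word_snoc[of r ys bar x] rs ly by (simp add: sigma_act_def r_def)
  also have "\<dots> = ip0 ip xs (act_word bar (rev (Wd n m)) (act_word bar r (ys @ [x])))"
    unfolding zs_def by (rule ip0_adjoint[of ip bar, OF sa]) (use set_Wd[OF m] lx ly n in auto)
  also have "\<dots> = ip0 ip xs (act_word bar (rev (Wd n m) @ r) (ys @ [x]))"
    by (simp add: act_word_append)
  also have "\<dots> = ip0 ip xs (sigma_act bar n (word_eval (rev (Wd n m) @ r)) (ys @ [x]))"
    by (subst sigma_act_eq[OF bi]) (use set_Wd[OF m] rs ly n in auto)
  also have "word_eval (rev (Wd n m) @ r) = rho n m \<circ> \<tau>"
    using rho_eval[of n m] n m re by (simp add: word_eval_append)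
  finally show ?thesis by (simp add: zs_def comp_def)
qed

lemma act_word_Nil_iff: "act_word bar w xs = [] \<longleftrightarrow> xs = []" "[] = act_word bar w xs \<longleftrightarrow> xs = []"
  by (metis length_0_conv length_act_word)+

lemma act_gen_Nil_iff: "act_gen bar a xs = [] \<longleftrightarrow> xs = []" "[] = act_gen bar a xs \<longleftrightarrow> xs = []"
  by (metis length_0_conv length_act_gen)+

lemma elem:
  assumes bi: "\<And>h. bar (bar h) = h" and sa: "\<And>h k. ip (bar h) k = ip h (bar k)"
    and cs: "\<And>h k. cnj (ip h k) = ip k h"
    and n: "n = Suc n0" and lx: "length xs = n"
  shows "fip (ipaq ip bar \<alpha> q) (fop (rann ip x) (Rop bar \<alpha> q n xs)) [(1, ys)] = ipaq ip bar \<alpha> q xs (ys @ [x])"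
proof -
  let ?E = "ipaq ip bar \<alpha> q"
  let ?c = "\<lambda>N \<sigma>. complex_of_real \<alpha> ^ l1 N \<sigma> * complex_of_real q ^ l2 N \<sigma>"
  have ne: "\<forall>(c, zs)\<in>set (Rop bar \<alpha> q n xs). zs \<noteq> []"
    using lx n by (auto simp: Rop_def act_word_Nil_iff act_gen_Nil_iff)
  have "fip ?E (fop (rann ip x) (Rop bar \<alpha> q n xs)) [(1, ys)]
      = (\<Sum>(c, zs)\<leftarrow>Rop bar \<alpha> q n xs. cnj c * cnj (ip x (last zs)) * ?E (butlast zs) ys)"
    by (rule fip_rann[OF ne])
  also have "\<dots> = (\<Sum>m\<in>sset n. cnj (cf \<alpha> q n m) * cnj (ip x (last (act_word bar (Wd n m) xs)))
                       * ?E (butlast (act_word bar (Wd n m) xs)) ys)"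
    by (rule Rop_sum[OF n])
  also have "\<dots> = ?E xs (ys @ [x])"
  proof (cases "length ys = n0")
    case False
    have "?E xs (ys @ [x]) = 0" using False lx n by (intro ipaq_zero) simp
    moreover have "?E (butlast (act_word bar (Wd n m) xs)) ys = 0" for m
      using False lx n by (intro ipaq_zero) simp
    ultimately show ?thesis by simp
  next
    case True
    have R: "?E xs (ys @ [x]) = (\<Sum>m\<in>sset n. \<Sum>\<tau>\<in>signed_perms n0.
               ?c n (rho n m \<circ> \<tau>) * ip0 ip xs (sigma_act bar n (rho n m \<circ> \<tau>) (ys @ [x])))"
    proof -
      have lz: "length (ys @ [x]) = n" using True n by simp
      show ?thesis unfolding ipaq_def lz by (rule sum_decomp[OF n])
    qed
    show ?thesis unfolding R
    proof (rule sum.cong[OF refl])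
      fix m assume m: "m \<in> sset n"
      define zs where "zs = act_word bar (Wd n m) xs"
      have "cnj (cf \<alpha> q n m) * cnj (ip x (last zs)) * ?E (butlast zs) ys
          = cf \<alpha> q n m * ip (last zs) x * (\<Sum>\<tau>\<in>signed_perms n0. ?c n0 \<tau> * ip0 ip (butlast zs) (sigma_act bar n0 \<tau> ys))"
        unfolding ipaq_def using True by (simp add: cnj_cf cs)
      also have "\<dots> = (\<Sum>\<tau>\<in>signed_perms n0. (cf \<alpha> q n m * ?c n0 \<tau>) * (ip0 ip (butlast zs) (sigma_act bar n0 \<tau> ys) * ip (last zs) x))"
        by (simp add: sum_distrib_left algebra_simps)
      also have "\<dots> = (\<Sum>\<tau>\<in>signed_perms n0. ?c n (rho n m \<circ> \<tau>) * ip0 ip xs (sigma_act bar n (rho n m \<circ> \<tau>) (ys @ [x])))"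
      proof (rule sum.cong[OF refl])
        fix \<tau> assume t: "\<tau> \<in> signed_perms n0"
        show "(cf \<alpha> q n m * ?c n0 \<tau>) * (ip0 ip (butlast zs) (sigma_act bar n0 \<tau> ys) * ip (last zs) x)
            = ?c n (rho n m \<circ> \<tau>) * ip0 ip xs (sigma_act bar n (rho n m \<circ> \<tau>) (ys @ [x]))"
          unfolding zs_def cf_mult[OF n t m] term_eq[of bar ip, OF bi sa n t m lx True] ..
      qed
      finally show "cnj (cf \<alpha> q n m) * cnj (ip x (last (act_word bar (Wd n m) xs))) * ?E (butlast (act_word bar (Wd n m) xs)) ys
          = (\<Sum>\<tau>\<in>signed_perms n0. ?c n (rho n m \<circ> \<tau>) * ip0 ip xs (sigma_act bar n (rho n m \<circ> \<tau>) (ys @ [x])))"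
        by (simp add: zs_def)
    qed
  qed
  finally show ?thesis .
qed

lemma fop_rcre: "fop (rcre x) g = map (\<lambda>(d, ys). (d, ys @ [x])) g"
  by (induction g) (auto simp: fop_def rcre_def)

theorem mainTheorem2:
  fixes bar :: "('r::{real_inner, complete_space} \<times> 'r) \<Rightarrow> 'r \<times> 'r"
    and \<alpha> q :: real and x :: "'r \<times> 'r" and n :: nat
    and f g :: "('r \<times> 'r) fock"
  assumes separable: "\<exists>D::'r set. countable D \<and> closure D = UNIV"
    and bar_add: "\<And>h k. bar (h + k) = bar h + bar k"
    and bar_scale: "\<And>z h. bar (cscale z h) = cscale z (bar h)"
    and bar_invol: "\<And>h. bar (bar h) = h"
    and bar_sa: "\<And>h k. hip (bar h) k = hip h (bar k)"
    and "-1 < \<alpha>" "\<alpha> < 1" "-1 < q" "q < 1"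
    and "n \<ge> 1"
    and f_deg: "\<forall>(c, xs)\<in>set f. length xs = n"
  shows "fip (ipaq hip bar \<alpha> q) (fop (rann hip x) (fop (Rop bar \<alpha> q n) f)) g
       = fip (ipaq hip bar \<alpha> q) f (fop (rcre x) g)"
proof -
  obtain n0 where n: "n = Suc n0" using \<open>n \<ge> 1\<close> by (cases n) auto
  let ?E = "ipaq hip bar \<alpha> q"
  have "fip ?E (fop (rann hip x) (fop (Rop bar \<alpha> q n) f)) g
      = (\<Sum>(c, xs)\<leftarrow>f. cnj c * fip ?E (fop (rann hip x) (Rop bar \<alpha> q n xs)) g)"
    by (simp add: fop_fop fip_fop_left)
  also have "\<dots> = (\<Sum>(c, xs)\<leftarrow>f. cnj c * (\<Sum>(d, ys)\<leftarrow>g. d * ?E xs (ys @ [x])))"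
  proof (rule arg_cong[where f=sum_list], rule map_cong[OF refl])
    fix p assume p: "p \<in> set f"
    obtain c xs where cxs: "p = (c, xs)" by (cases p)
    have lx: "length xs = n" using f_deg p cxs by auto
    have "fip ?E (fop (rann hip x) (Rop bar \<alpha> q n xs)) g
        = (\<Sum>(d, ys)\<leftarrow>g. d * fip ?E (fop (rann hip x) (Rop bar \<alpha> q n xs)) [(1, ys)])"
      by (rule fip_right_single)
    also have "\<dots> = (\<Sum>(d, ys)\<leftarrow>g. d * ?E xs (ys @ [x]))"
      using elem[of bar hip, OF bar_invol bar_sa hip_cnj n lx] by simp
    finally show "(\<lambda>(c, xs). cnj c * fip ?E (fop (rann hip x) (Rop bar \<alpha> q n xs)) g) p
        = (\<lambda>(c, xs). cnj c * (\<Sum>(d, ys)\<leftarrow>g. d * ?E xs (ys @ [x]))) p"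
      by (simp add: cxs)
  qed
  also have "\<dots> = fip ?E f (fop (rcre x) g)"
    unfolding fip_def fop_rcre
    by (simp add: split_def sum_list_const_mult[symmetric] map_map comp_def mult.assoc)
  finally show ?thesis .
qed


end
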